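(* Let $R$ be an associative ring and $S=\begin{pmatrix}A&B\\ C&D\end{pmatrix}$ a non-commuting switch over $R$. Let $P=A^{-1}B^{-1}A$ and $Q=B^{-1}(1-A)$. For $n\ge2$ and $1\le i\le n-1$ let $S_i=I_{i-1}\oplus S\oplus I_{n-i-1}$ be the $n\times n$ block-diagonal matrix. Then $$(P^{n-1},\ldots,P,1)\,S_i=(P^{n-1},\ldots,P,1)\quad\text{and}\quad S_i\,(1,Q,\ldots,Q^{n-1})^T=(1,Q,\ldots,Q^{n-1})^T.$$
   Context: A non-commuting switch over $R$ is $S=\begin{pmatrix}A&B\\ C&D\end{pmatrix}$ where $A$, $A-1$, $B$ are invertible elements of $R$ that do not commute and satisfy the fundamental equation $A^{-1}B^{-1}AB-BA^{-1}B^{-1}A=B^{-1}AB-A$, and $C=A^{-1}B^{-1}A(1-A)$, $D=1-A^{-1}B^{-1}AB$. *)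

theory Defs
  imports Main
begin

definition invertible_r :: "'a::ring_1 \<Rightarrow> bool" where
  "invertible_r a \<longleftrightarrow> (\<exists>b. a * b = 1 \<and> b * a = 1)"

definition rinv :: "'a::ring_1 \<Rightarrow> 'a" where
  "rinv a = (THE b. a * b = 1 \<and> b * a = 1)"

definition nc_switch :: "'a::ring_1 \<Rightarrow> 'a \<Rightarrow> 'a \<Rightarrow> 'a \<Rightarrow> bool" where
  "nc_switch A B C D \<longleftrightarrow>
     invertible_r A \<and> invertible_r (A - 1) \<and> invertible_r B \<and> A * B \<noteq> B * A \<and>
     rinv A * rinv B * A * B - B * rinv A * rinv B * A = rinv B * A * B - A \<and>
     C = rinv A * rinv B * A * (1 - A) \<and>
     D = 1 - rinv A * rinv B * A * B"

text \<open>The n x n matrix S_i = I_{i-1} \<oplus> S \<oplus> I_{n-i-1}, with rows and columns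
  indexed by 1..n (entries outside 1..n are irrelevant).\<close>

definition switch_mat :: "nat \<Rightarrow> 'a::ring_1 \<Rightarrow> 'a \<Rightarrow> 'a \<Rightarrow> 'a \<Rightarrow> nat \<Rightarrow> nat \<Rightarrow> 'a" where
  "switch_mat i A B C D j k =
     (if j = i \<and> k = i then A
      else if j = i \<and> k = i + 1 then B
      else if j = i + 1 \<and> k = i then C
      else if j = i + 1 \<and> k = i + 1 then D
      else if j = k then 1 else 0)"

end

theory Submission
  imports Defs
begin

lemma rinv_props:
  fixes a :: "'a::ring_1"
  assumes "invertible_r a"
  shows "a * rinv a = 1 \<and> rinv a * a = 1"
proof -
  obtain b where b: "a * b = 1" "b * a = 1" using assms unfolding invertible_r_def by blast
  have u: "\<And>c. a * c = 1 \<and> c * a = 1 \<Longrightarrow> c = b"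
  proof -
    fix c assume c: "a * c = 1 \<and> c * a = 1"
    have "c = c * (a * b)" using b by simp
    also have "\<dots> = (c * a) * b" by (simp add: mult.assoc)
    also have "\<dots> = b" using c by simp
    finally show "c = b" .
  qed
  have "rinv a = b" unfolding rinv_def
    by (rule the_equality) (use b u in blast)+
  thus ?thesis using b by simp
qed

lemma sum_two:
  fixes f :: "nat \<Rightarrow> 'a::comm_monoid_add"
  assumes "1 \<le> i" "i + 1 \<le> n" "\<And>j. j \<noteq> i \<Longrightarrow> j \<noteq> i + 1 \<Longrightarrow> f j = 0"
  shows "(\<Sum>j=1..n. f j) = f i + f (i+1)"
proof -
  have "(\<Sum>j=1..n. f j) = (\<Sum>j\<in>{i, i+1}. f j)"
    by (rule sum.mono_neutral_right) (use assms in auto)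
  thus ?thesis by simp
qed

lemma sum_one:
  fixes f :: "nat \<Rightarrow> 'a::comm_monoid_add"
  assumes "1 \<le> k" "k \<le> n" "\<And>j. j \<noteq> k \<Longrightarrow> f j = 0"
  shows "(\<Sum>j=1..n. f j) = f k"
proof -
  have "(\<Sum>j=1..n. f j) = (\<Sum>j\<in>{k}. f j)"
    by (rule sum.mono_neutral_right) (use assms in auto)
  thus ?thesis by simp
qed

theorem lemma9p2:
  fixes A B C D :: "'a::ring_1" and n i :: nat
  assumes "nc_switch A B C D"
    and "2 \<le> n" and "1 \<le> i" and "i \<le> n - 1"
  defines "P \<equiv> rinv A * rinv B * A"
    and "Q \<equiv> rinv B * (1 - A)"
  shows "(\<forall>k\<in>{1..n}. (\<Sum>j=1..n. P ^ (n - j) * switch_mat i A B C D j k) = P ^ (n - k))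
       \<and> (\<forall>j\<in>{1..n}. (\<Sum>k=1..n. switch_mat i A B C D j k * Q ^ (k - 1)) = Q ^ (j - 1))"
proof -
  have sw: "invertible_r B" "C = P * (1 - A)" "D = 1 - P * B"
    using assms(1) unfolding nc_switch_def P_def by auto
  have Bi: "B * rinv B = 1" "rinv B * B = 1" using rinv_props[OF sw(1)] by auto
  have i1: "i + 1 \<le> n" using assms by auto
  have e1: "P * A + C = P" using sw by (simp add: algebra_simps)
  have e2: "P * B + D = 1" using sw by (simp add: algebra_simps)
  have e3: "A + B * Q = 1" unfolding Q_def using Bi
    by (simp add: algebra_simps mult.assoc[symmetric])
  have e4: "C + D * Q = Q"
  proof -
    have "D * Q = Q - P * (B * rinv B) * (1 - A)" unfolding Q_def sw(3)
      by (simp add: algebra_simps mult.assoc)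
    thus ?thesis using Bi sw(2) by simp
  qed
  have pn: "P ^ (n - i) = P ^ (n - (i+1)) * P"
  proof -
    have "n - i = Suc (n - (i+1))" using i1 by simp
    thus ?thesis by (simp only: power_Suc2)
  qed
  have qi: "Q ^ i = Q * Q ^ (i - 1)"
  proof -
    obtain m where "i = Suc m" using assms(3) by (cases i) auto
    thus ?thesis by simp
  qed
  show ?thesis
  proof (intro conjI ballI)
    fix k assume k: "k \<in> {1..n}"
    consider "k = i" | "k = i + 1" | "k \<noteq> i" "k \<noteq> i + 1" by blast
    then show "(\<Sum>j=1..n. P ^ (n - j) * switch_mat i A B C D j k) = P ^ (n - k)"
    proof cases
      case 1
      have "(\<Sum>j=1..n. P ^ (n - j) * switch_mat i A B C D j k)
          = P ^ (n - i) * A + P ^ (n - (i+1)) * C"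
        by (subst sum_two[OF assms(3) i1]) (auto simp: switch_mat_def 1)
      also have "\<dots> = P ^ (n - (i+1)) * (P * A + C)"
        by (simp add: pn distrib_left mult.assoc)
      also have "\<dots> = P ^ (n - k)" using e1 1 pn by simp
      finally show ?thesis .
    next
      case 2
      have "(\<Sum>j=1..n. P ^ (n - j) * switch_mat i A B C D j k)
          = P ^ (n - i) * B + P ^ (n - (i+1)) * D"
        by (subst sum_two[OF assms(3) i1]) (auto simp: switch_mat_def 2)
      also have "\<dots> = P ^ (n - (i+1)) * (P * B + D)"
        by (simp add: pn distrib_left mult.assoc)
      also have "\<dots> = P ^ (n - k)" using e2 2 by simp
      finally show ?thesis .
    next
      case 3
      show ?thesis
        by (subst sum_one[of k]) (use k 3 in \<open>auto simp: switch_mat_def\<close>)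
    qed
  next
    fix j assume j: "j \<in> {1..n}"
    consider "j = i" | "j = i + 1" | "j \<noteq> i" "j \<noteq> i + 1" by blast
    then show "(\<Sum>k=1..n. switch_mat i A B C D j k * Q ^ (k - 1)) = Q ^ (j - 1)"
    proof cases
      case 1
      have "(\<Sum>k=1..n. switch_mat i A B C D j k * Q ^ (k - 1))
          = A * Q ^ (i - 1) + B * Q ^ i"
        by (subst sum_two[OF assms(3) i1]) (auto simp: switch_mat_def 1)
      also have "\<dots> = (A + B * Q) * Q ^ (i - 1)"
        by (simp add: qi algebra_simps mult.assoc)
      also have "\<dots> = Q ^ (j - 1)" using e3 1 by simp
      finally show ?thesis .
    next
      case 2
      have "(\<Sum>k=1..n. switch_mat i A B C D j k * Q ^ (k - 1))
          = C * Q ^ (i - 1) + D * Q ^ i"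
        by (subst sum_two[OF assms(3) i1]) (auto simp: switch_mat_def 2)
      also have "\<dots> = (C + D * Q) * Q ^ (i - 1)"
        by (simp add: qi algebra_simps mult.assoc)
      also have "\<dots> = Q ^ (j - 1)" using e4 2 qi by simp
      finally show ?thesis .
    next
      case 3
      show ?thesis
        by (subst sum_one[of j]) (use j 3 in \<open>auto simp: switch_mat_def\<close>)
    qed
  qed
qed

end
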